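(* Fix an integer $g \ge 0$. For any $0 < c_1 < 1$ and $c_2 > 1$ we have $$p^{c_1/p} < r_{(g,p)} < p^{c_2/p} \quad \text{for all sufficiently large } p.$$ In particular $\displaystyle\lim_{p \to \infty} \frac{p \log r_{(g,p)}}{\log p} = 1$.
   Context: For nonnegative integers $g,p$ let $$B_{(g,p)}(t) = t^{2p+1}(t^{2g+1}-1) + 1 - 2t^{p+g+1} - t^{2g+1},$$ and let $r_{(g,p)}$ be the unique real root of $B_{(g,p)}(t)$ greater than $1$. *)

theory Defs
  imports "HOL-Analysis.Analysis"
begin

definition B_poly :: "nat \<Rightarrow> nat \<Rightarrow> real \<Rightarrow> real" where
  "B_poly g p t = t^(2*p+1) * (t^(2*g+1) - 1) + 1 - 2 * t^(p+g+1) - t^(2*g+1)"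

text \<open>The unique real root of B_(g,p) greater than 1 (uniqueness is asserted in the paper).\<close>
definition r_root :: "nat \<Rightarrow> nat \<Rightarrow> real" where
  "r_root g p = (THE t. t > 1 \<and> B_poly g p t = 0)"

end

theory Submission
  imports Defs
begin

lemma B_alt: "B_poly g p t = (t^(2*g+1)-1)*(t^(2*p+1)-1) - 2*t^(p+g+1)"
  unfolding B_poly_def by (simp add: algebra_simps)

lemma u_mono:
  fixes u w :: real
  assumes "1 < u" "u < w"
  shows "u + 1/u < w + 1/w"
proof -
  have "w + 1/w - (u + 1/u) = (w - u) * (u * w - 1) / (u * w)"
    using assms by (simp add: field_simps)
  moreover have "(w - u) * (u * w - 1) / (u * w) > 0"
  proof -
    have "u * 1 < u * w" using assms by (intro mult_strict_left_mono) auto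
    hence "u * w > 1" using assms by linarith
    moreover have "u * w > 0" "w - u > 0" using assms by auto
    ultimately show ?thesis by simp
  qed
  ultimately show ?thesis by linarith
qed

lemma u_pos:
  fixes u :: real
  assumes "1 < u"
  shows "0 < u + 1/u - 2"
proof -
  have "u + 1/u - 2 = (u-1)^2/u" using assms by (simp add: field_simps power2_eq_square)
  thus ?thesis using assms by simp
qed

lemma H_mono:
  fixes t1 t2 :: real and k :: nat
  assumes "1 < t1" "t1 < t2" "k > 0"
  shows "0 < t1^k + 1/t1^k - 2 \<and> t1^k + 1/t1^k - 2 < t2^k + 1/t2^k - 2"
proof -
  have a: "1 < t1^k" using assms by (simp add: one_less_power)
  have b: "t1^k < t2^k" using assms by (intro power_strict_mono) auto
  show ?thesis using u_pos[OF a] u_mono[OF a b] by linarith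
qed

lemma root_H:
  fixes t :: real
  assumes "1 < t" "B_poly g p t = 0"
  shows "(t^(2*g+1) + 1/t^(2*g+1) - 2) * (t^(2*p+1) + 1/t^(2*p+1) - 2) = 4"
proof -
  define a where "a = t^(2*g+1)"
  define n where "n = t^(2*p+1)"
  have apos: "a > 0" "n > 0" using assms by (auto simp: a_def n_def)
  have m: "t^(p+g+1) * t^(p+g+1) = a * n"
  proof -
    have "p+g+1 + (p+g+1) = (2*g+1) + (2*p+1)" by simp
    hence "t^(p+g+1) * t^(p+g+1) = t^((2*g+1) + (2*p+1))" by (metis power_add)
    thus ?thesis unfolding a_def n_def by (simp add: power_add)
  qed
  have e: "(a-1)*(n-1) = 2*t^(p+g+1)" using assms(2) by (simp add: B_alt a_def n_def)
  have "((a-1)*(n-1))^2 = 4 * (a*n)"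
    using e m by (simp add: power2_eq_square algebra_simps)
  hence "(a + 1/a - 2) * (n + 1/n - 2) * (a*n) = 4 * (a*n)"
    using apos by (simp add: field_simps power2_eq_square)
  hence "(a + 1/a - 2) * (n + 1/n - 2) = 4" using apos by simp
  thus ?thesis by (simp add: a_def n_def)
qed

lemma B_unique:
  fixes t1 t2 :: real
  assumes "1 < t1" "1 < t2" "B_poly g p t1 = 0" "B_poly g p t2 = 0"
  shows "t1 = t2"
proof (rule ccontr)
  assume ne: "t1 \<noteq> t2"
  have *: False if "1 < x" "x < y" "B_poly g p x = 0" "B_poly g p y = 0" for x y :: real
  proof -
    have h1: "0 < x^(2*g+1) + 1/x^(2*g+1) - 2 \<and> x^(2*g+1) + 1/x^(2*g+1) - 2 < y^(2*g+1) + 1/y^(2*g+1) - 2"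
      using H_mono[OF that(1,2), of "2*g+1"] by simp
    have h2: "0 < x^(2*p+1) + 1/x^(2*p+1) - 2 \<and> x^(2*p+1) + 1/x^(2*p+1) - 2 < y^(2*p+1) + 1/y^(2*p+1) - 2"
      using H_mono[OF that(1,2), of "2*p+1"] by simp
    have "(x^(2*g+1) + 1/x^(2*g+1) - 2) * (x^(2*p+1) + 1/x^(2*p+1) - 2)
        < (y^(2*g+1) + 1/y^(2*g+1) - 2) * (y^(2*p+1) + 1/y^(2*p+1) - 2)"
      using h1 h2 by (intro mult_strict_mono) auto
    moreover have "y > 1" using that by linarith
    ultimately show False using root_H[OF that(1,3)] root_H[of y, OF _ that(4)] by linarith
  qed
  show False
  proof (cases "t1 < t2")
    case True thus ?thesis using * assms by blast
  next
    case False hence "t2 < t1" using ne by linarith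
    thus ?thesis using * assms by blast
  qed
qed

lemma r_between:
  fixes x1 x2 :: real
  assumes "1 < x1" "x1 < x2" "B_poly g p x1 < 0" "0 < B_poly g p x2"
  shows "x1 < r_root g p \<and> r_root g p < x2"
proof -
  have cont: "continuous_on {x1..x2} (B_poly g p)"
    unfolding B_poly_def by (intro continuous_intros)
  obtain x where x: "x1 \<le> x" "x \<le> x2" "B_poly g p x = 0"
    using IVT'[of "B_poly g p" x1 0 x2] assms cont by force
  have x1': "x \<noteq> x1" "x \<noteq> x2" using x assms by auto
  have "r_root g p = x"
    unfolding r_root_def
  proof (rule the_equality)
    show "x > 1 \<and> B_poly g p x = 0" using x assms by auto
    fix t assume "t > 1 \<and> B_poly g p t = 0"
    thus "t = x" using B_unique[of t x g p] x assms by auto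
  qed
  thus ?thesis using x x1' by auto
qed

lemma exp_pow: "exp (s::real) ^ k = exp (real k * s)"
  by (simp add: exp_of_nat_mult)

lemma lower_pt:
  fixes c :: real
  assumes p2: "p \<ge> 2" and c0: "0 < c" and c1: "c < 1"
    and hg: "(real g + 1) * c * (ln (real p) / real p) \<le> ln 2"
    and hl: "ln (real p) / real p powr (1-c) \<le> 1 / ((2 * g+1) * c)"
  shows "B_poly g p (real p powr (c / real p)) < 0"
proof -
  define L where "L = ln (real p)"
  define s where "s = c * L / real p"
  have pp: "real p > 1" using p2 by simp
  have L0: "L > 0" unfolding L_def using pp by simp
  have s0: "s > 0" unfolding s_def using c0 L0 p2 by simp
  have t: "real p powr (c / real p) = exp s"
    unfolding s_def L_def using pp by (simp add: powr_def)
  define a where "a = real (2 * g+1)"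
  define n where "n = real (2 * p+1)"
  define m where "m = real (p+g+1)"
  have a0: "a > 0" unfolding a_def by simp
  define A where "A = exp (a * s) - 1"
  define N where "N = exp (n * s) - 1"
  define M where "M = exp (m * s)"
  have B: "B_poly g p (exp s) = A * N - 2 * M"
    unfolding B_alt A_def N_def M_def a_def n_def m_def exp_pow by simp
  have A0: "A > 0" unfolding A_def using a0 s0 by simp
  have Ale: "A \<le> a * s * exp (a * s)"
  proof -
    have "1 + (-(a * s)) \<le> exp (-(a * s))" by (rule exp_ge_add_one_self)
    hence "(1 - a * s) * exp (a * s) \<le> exp (-(a * s)) * exp (a * s)" by (intro mult_right_mono) auto
    also have "\<dots> = 1" by (simp flip: exp_add)
    finally show ?thesis unfolding A_def by (simp add: algebra_simps)
  qed
  have NM: "N < exp (n * s)" unfolding N_def by simp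
  have "A * N < A * exp (n * s)" using A0 NM by simp
  also have "\<dots> \<le> a * s * exp (a * s) * exp (n * s)" using Ale by (intro mult_right_mono) auto
  also have "\<dots> = a * s * M * M"
  proof -
    have "a * s + n * s = m * s + m * s" unfolding a_def n_def m_def by (simp add: algebra_simps)
    hence "exp (a * s) * exp (n * s) = M * M" unfolding M_def by (metis exp_add)
    thus ?thesis by (simp add: mult.assoc)
  qed
  finally have AN: "A * N < a * s * M * M" .
  have ms: "m * s = c * L + (real g + 1) * c * (L/real p)"
    unfolding m_def s_def using p2 by (simp add: field_simps)
  have e2: "exp ((real g + 1) * c * (L/real p)) \<le> 2"
  proof -
    have h: "(real g + 1) * c * (L/real p) \<le> ln 2" using hg unfolding L_def by simp
    have "exp ((real g + 1) * c * (L/real p)) \<le> exp (ln 2)" using h by (simp only: exp_le_cancel_iff)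
    thus ?thesis by simp
  qed
  have Mle: "M \<le> exp (c * L) * 2"
    unfolding M_def ms exp_add using e2 by (intro mult_left_mono) auto
  have pc: "real p powr (1-c) = real p / exp (c * L)"
    using pp unfolding L_def by (simp add: powr_def algebra_simps exp_diff)
  have "a * s * M \<le> a * s * (exp (c * L) * 2)" using Mle a0 s0 by (intro mult_left_mono) auto
  also have "\<dots> = 2 * a * c * (L / real p powr (1-c))"
    unfolding pc s_def using pp by (simp add: field_simps)
  also have "\<dots> \<le> 2 * a * c * (1/((2 * g+1) * c))"
    using hl a0 c0 unfolding L_def by (intro mult_left_mono) (auto simp: add.commute)
  also have "\<dots> = 2"
  proof -
    have ac: "(2 * g+1) * c = a * c" unfolding a_def by simp
    show ?thesis unfolding ac using a0 c0 by simp
  qed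
  finally have "a * s * M \<le> 2" .
  hence "a * s * M * M \<le> 2 * M" unfolding M_def by (intro mult_right_mono) auto
  thus ?thesis using AN B t by simp
qed

lemma upper_pt:
  fixes c :: real
  assumes p2: "p \<ge> 2" and c1: "1 < c"
    and hg: "real g * c * (ln (real p) / real p) \<le> ln 2"
    and hL: "(2 * real g + 1) * c * ln (real p) > 8"
    and hn: "2 * c * ln (real p) \<ge> ln 2"
  shows "B_poly g p (real p powr (c / real p)) > 0"
proof -
  define L where "L = ln (real p)"
  define s where "s = c * L / real p"
  have pp: "real p > 1" using p2 by simp
  have L0: "L > 0" unfolding L_def using pp by simp
  have s0: "s > 0" unfolding s_def using c1 L0 p2 by simp
  have t: "real p powr (c / real p) = exp s"
    unfolding s_def L_def using pp by (simp add: powr_def)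
  define a where "a = real (2 * g+1)"
  define n where "n = real (2 * p+1)"
  define m where "m = real (p+g+1)"
  have a0: "a > 0" unfolding a_def by simp
  define A where "A = exp (a * s) - 1"
  define N where "N = exp (n * s) - 1"
  define M where "M = exp (m * s)"
  have B: "B_poly g p (exp s) = A * N - 2 * M"
    unfolding B_alt A_def N_def M_def a_def n_def m_def exp_pow by simp
  have Age: "A \<ge> a * s" unfolding A_def using exp_ge_add_one_self[of "a * s"] by linarith
  have ns: "n * s \<ge> ln 2"
  proof -
    have "n * s = 2 * c * L + c * L / real p" unfolding n_def s_def using p2 by (simp add: field_simps)
    moreover have "c * L / real p \<ge> 0" using c1 L0 by simp
    ultimately show ?thesis using hn unfolding L_def by linarith
  qed
  have en2: "exp (n * s) \<ge> 2"
  proof -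
    have "exp (ln 2) \<le> exp (n * s)" using ns by (simp only: exp_le_cancel_iff)
    thus ?thesis by simp
  qed
  have Nge: "N \<ge> exp (n * s) / 2" unfolding N_def using en2 by simp
  have "A * N \<ge> a * s * (exp (n * s) / 2)"
    using Age Nge mult_pos_pos[OF a0 s0] by (intro mult_mono) auto
  have nm: "n * s = m * s + (c * L - real g * c * (L / real p))"
    unfolding n_def m_def s_def using p2 by (simp add: field_simps)
  have eg: "exp (real g * c * (L / real p)) \<le> 2"
  proof -
    have h: "real g * c * (L / real p) \<le> ln 2" using hg unfolding L_def by simp
    have "exp (real g * c * (L / real p)) \<le> exp (ln 2)" using h by (simp only: exp_le_cancel_iff)
    thus ?thesis by simp
  qed
  have ecL: "exp (c * L) \<ge> real p"
  proof -
    have "exp L \<le> exp (c * L)" using c1 L0 by simp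
    thus ?thesis unfolding L_def using pp by simp
  qed
  have "exp (c * L - real g * c * (L / real p)) = exp (c * L) / exp (real g * c * (L / real p))"
    by (simp add: exp_diff)
  also have "\<dots> \<ge> exp (c * L) / 2" using eg by (intro divide_left_mono) auto
  finally have E: "exp (c * L - real g * c * (L / real p)) \<ge> real p / 2" using ecL by linarith
  have "a * s * exp (c * L - real g * c * (L / real p)) \<ge> a * s * (real p / 2)"
    using E a0 s0 by (intro mult_left_mono) auto
  also have "a * s * (real p / 2) = a * c * L / 2" unfolding s_def using p2 by simp
  finally have "a * s * exp (c * L - real g * c * (L / real p)) > 4"
    using hL unfolding a_def L_def by (simp add: algebra_simps)
  hence X: "a * s * exp (c * L - real g * c * (L / real p)) * M > 4 * M"
    by (rule mult_strict_right_mono) (simp add: M_def)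
  have "a * s * exp (n * s) = a * s * exp (c * L - real g * c * (L / real p)) * M"
    unfolding nm M_def by (simp add: exp_add mult_ac)
  hence "a * s * exp (n * s) > 4 * M" using X by (simp only:)
  hence "A * N > 2 * M" using \<open>A * N \<ge> a * s * (exp (n * s) / 2)\<close> by linarith
  thus ?thesis using B t by simp
qed

lemma ev_small:
  fixes K :: real
  assumes "K > 0"
  shows "\<forall>\<^sub>F p in sequentially. ln (real p) / real p < K"
  using order_tendstoD(2)[OF lim_ln_over_n] assms by simp

lemma ev_small_pow:
  fixes K e :: real
  assumes "K > 0" "e > 0"
  shows "\<forall>\<^sub>F p in sequentially. ln (real p) / real p powr e < K"
  using order_tendstoD(2)[OF lim_ln_over_power[OF assms(2)]] assms by simp

lemma ev_big:
  fixes K :: real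
  shows "\<forall>\<^sub>F p in sequentially. ln (real p) \<ge> K"
proof -
  have "filterlim (\<lambda>p. ln (real p)) at_top sequentially"
    by (rule filterlim_compose[OF ln_at_top filterlim_real_sequentially])
  thus ?thesis unfolding filterlim_at_top by blast
qed

lemma part1:
  fixes c1 c2 :: real
  assumes c: "0 < c1" "c1 < 1" "1 < c2"
  shows "\<forall>\<^sub>F p in sequentially.
               real p powr (c1 / real p) < r_root g p \<and>
               r_root g p < real p powr (c2 / real p)"
proof -
  have l2: "ln (2::real) > 0" by simp
  have e1: "\<forall>\<^sub>F p in sequentially. ln (real p) / real p < ln 2 / ((real g + 1) * c1)"
    using c l2 by (intro ev_small) simp
  have e2: "\<forall>\<^sub>F p in sequentially. ln (real p) / real p < ln 2 / ((real g + 1) * c2)"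
    using c l2 by (intro ev_small) simp
  have e3: "\<forall>\<^sub>F p in sequentially. ln (real p) / real p powr (1 - c1) < 1 / ((2 * real g + 1) * c1)"
    using c by (intro ev_small_pow) auto
  have e4: "\<forall>\<^sub>F p in sequentially. ln (real p) \<ge> 9 / ((2 * real g + 1) * c2)"
    by (rule ev_big)
  have e5: "\<forall>\<^sub>F p in sequentially. ln (real p) \<ge> ln 2 / (2 * c2)"
    by (rule ev_big)
  have e6: "\<forall>\<^sub>F p in sequentially. p \<ge> (2::nat)"
    by (rule eventually_ge_at_top)
  show ?thesis
    using e1 e2 e3 e4 e5 e6
  proof eventually_elim
    case (elim p)
    have pp: "real p > 1" using elim(6) by simp
    have L0: "ln (real p) > 0" using pp by simp
    have x0: "ln (real p) / real p \<ge> 0" using L0 by simp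
    have gp: "(real g + 1) * c1 > 0" "(real g + 1) * c2 > 0" "(2 * real g + 1) * c2 > 0"
      using c by auto
    have hg1: "(real g + 1) * c1 * (ln (real p) / real p) \<le> ln 2"
      using elim(1) gp(1) by (simp add: field_simps)
    have hg2': "(real g + 1) * c2 * (ln (real p) / real p) \<le> ln 2"
      using elim(2) gp(2) by (simp add: field_simps)
    have "real g * c2 * (ln (real p) / real p) \<le> (real g + 1) * c2 * (ln (real p) / real p)"
      using c x0 by (intro mult_right_mono) auto
    hence hg2: "real g * c2 * (ln (real p) / real p) \<le> ln 2" using hg2' by linarith
    have hL: "(2 * real g + 1) * c2 * ln (real p) > 8"
    proof -
      have "(2 * real g + 1) * c2 * ln (real p) \<ge> (2 * real g + 1) * c2 * (9 / ((2 * real g + 1) * c2))"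
        using elim(4) gp(3) by (intro mult_left_mono) auto
      thus ?thesis using gp(3) c by simp
    qed
    have hn: "2 * c2 * ln (real p) \<ge> ln 2"
    proof -
      have "2 * c2 * ln (real p) \<ge> 2 * c2 * (ln 2 / (2 * c2))"
        using elim(5) c by (intro mult_left_mono) auto
      thus ?thesis using c by simp
    qed
    have lo: "B_poly g p (real p powr (c1 / real p)) < 0"
      using lower_pt[OF elim(6) c(1,2) hg1] elim(3) by (simp add: algebra_simps)
    have up: "B_poly g p (real p powr (c2 / real p)) > 0"
      by (rule upper_pt[OF elim(6) c(3) hg2 hL hn])
    have x1: "1 < real p powr (c1 / real p)"
      using powr_less_mono[of 0 "c1 / real p" "real p"] pp c by simp
    have x12: "real p powr (c1 / real p) < real p powr (c2 / real p)"
      using powr_less_mono[of "c1 / real p" "c2 / real p" "real p"] pp c by (simp add: divide_strict_right_mono)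
    show ?case using r_between[OF x1 x12 lo up] .
  qed
qed

theorem lemma4p1:
  fixes g :: nat
  shows "(\<forall>c1 c2 :: real. 0 < c1 \<and> c1 < 1 \<and> c2 > 1 \<longrightarrow>
            (\<forall>\<^sub>F p in sequentially.
               real p powr (c1 / real p) < r_root g p \<and>
               r_root g p < real p powr (c2 / real p)))
         \<and> ((\<lambda>p. real p * ln (r_root g p) / ln (real p)) \<longlonglongrightarrow> 1)"
proof
  show P1: "\<forall>c1 c2 :: real. 0 < c1 \<and> c1 < 1 \<and> c2 > 1 \<longrightarrow>
            (\<forall>\<^sub>F p in sequentially.
               real p powr (c1 / real p) < r_root g p \<and>
               r_root g p < real p powr (c2 / real p))"
    using part1 by blast
  show "(\<lambda>p. real p * ln (r_root g p) / ln (real p)) \<longlonglongrightarrow> 1"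
    unfolding tendsto_iff
  proof (intro allI impI)
    fix e :: real assume e: "e > 0"
    define c1 where "c1 = max (1/2) (1 - e/2)"
    define c2 where "c2 = 1 + e/2"
    have c: "0 < c1" "c1 < 1" "1 < c2" using e unfolding c1_def c2_def by auto
    have ev: "\<forall>\<^sub>F p in sequentially.
               real p powr (c1 / real p) < r_root g p \<and>
               r_root g p < real p powr (c2 / real p)"
      using part1[OF c] .
    show "\<forall>\<^sub>F p in sequentially. dist (real p * ln (r_root g p) / ln (real p)) 1 < e"
      using ev eventually_ge_at_top[of "2::nat"]
    proof eventually_elim
      case (elim p)
      have pp: "real p > 1" using elim(2) by simp
      have L0: "ln (real p) > 0" using pp by simp
      have x0: "real p powr (c1 / real p) > 0" using pp by simp
      have r0: "r_root g p > 0" using x0 elim(1) by linarith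
      have "ln (real p powr (c1 / real p)) < ln (r_root g p)"
        by (subst ln_less_cancel_iff) (use elim(1) x0 r0 in auto)
      hence l1: "c1 / real p * ln (real p) < ln (r_root g p)" using pp by simp
      have "ln (r_root g p) < ln (real p powr (c2 / real p))"
        by (subst ln_less_cancel_iff) (use elim(1) r0 pp in auto)
      hence l2: "ln (r_root g p) < c2 / real p * ln (real p)" using pp by simp
      define f where "f = real p * ln (r_root g p) / ln (real p)"
      have "c1 < f" unfolding f_def using l1 L0 pp by (simp add: field_simps)
      moreover have "f < c2" unfolding f_def using l2 L0 pp by (simp add: field_simps)
      ultimately have "1 - e/2 < f" "f < 1 + e/2" unfolding c1_def c2_def by auto
      thus ?case unfolding f_def[symmetric] dist_real_def by linarith
    qed
  qed
qed

end
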